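(* Let $m_{11},m_{12},m_{13},l_1,l_2\in k$ with $(m_{11},m_{12},m_{13})\neq0$, $m_{12}l_1^2+m_{13}l_2^2=m_{11}$, $l_1\neq0$ and $l_2=0$, and let $M=\begin{pmatrix}m_{11}&m_{12}&m_{13}\\ l_1m_{11}&l_1m_{12}&l_1m_{13}\\ l_2m_{11}&l_2m_{12}&l_2m_{13}\end{pmatrix}$. Then: (1) if $m_{12}\neq0$ and $m_{13}\neq0$, then $\mathcal{A}_{\mathcal{O}_{-1}(k^3)}(M)\cong\mathcal{A}_{\mathcal{O}_{-1}(k^3)}(E_{11}+E_{12}+E_{13}+E_{21}+E_{22}+E_{23})$; (2) if $m_{12}=0$ and $m_{13}\neq0$, then $\mathcal{A}_{\mathcal{O}_{-1}(k^3)}(M)\cong\mathcal{A}_{\mathcal{O}_{-1}(k^3)}(E_{13}+E_{23})$; (3) if $m_{12}\neq0$ and $m_{13}=0$, then $\mathcal{A}_{\mathcal{O}_{-1}(k^3)}(M)\cong\mathcal{A}_{\mathcal{O}_{-1}(k^3)}(E_{11}+E_{12}+E_{21}+E_{22})$.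
   Context: $k$ is an algebraically closed field of characteristic zero. $E_{ij}$ denotes the $3\times3$ matrix unit with $1$ in position $(i,j)$. For $M=(m_{ij})\in M_3(k)$, $\mathcal{A}_{\mathcal{O}_{-1}(k^3)}(M)$ is the connected cochain DG algebra whose underlying graded algebra is generated by degree-one $x_1,x_2,x_3$ subject to $x_ix_j=-x_jx_i$ ($i<j$), with differential determined by $\partial(x_i)=\sum_j m_{ij}x_j^2$ and the Leibniz rule; $\cong$ means isomorphism of DG algebras. *)

theory Defs
  imports "HOL-Computational_Algebra.Polynomial"
begin

text \<open>The graded algebra O_{-1}(k^3): elements are finitely supported coefficient
functions on exponent triples (a1,a2,a3), the triple standing for the
normal-ordered monomial x1^a1 x2^a2 x3^a3.  The relations x_i x_j = - x_j x_i (i<j)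
give  x^a x^b = (-1)^(a2 b1 + a3 b1 + a3 b2) x^(a+b).\<close>

type_synonym 'k elt = "nat \<times> nat \<times> nat \<Rightarrow> 'k"

definition alg_closed :: "'k::field itself \<Rightarrow> bool" where
  "alg_closed _ \<longleftrightarrow> (\<forall>p::'k poly. degree p \<ge> 1 \<longrightarrow> (\<exists>x. poly p x = 0))"

definition carrierO :: "'k::field elt set" where
  "carrierO = {f. finite {a. f a \<noteq> 0}}"

definition mdeg :: "nat \<times> nat \<times> nat \<Rightarrow> nat" where
  "mdeg a = fst a + fst (snd a) + snd (snd a)"

definition homog :: "nat \<Rightarrow> 'k::field elt \<Rightarrow> bool" where
  "homog n f \<longleftrightarrow> (\<forall>a. f a \<noteq> 0 \<longrightarrow> mdeg a = n)"

definition mon :: "nat \<times> nat \<times> nat \<Rightarrow> 'k::field elt" where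
  "mon a = (\<lambda>b. if b = a then 1 else 0)"

definition oneO :: "'k::field elt" where
  "oneO = mon (0,0,0)"

definition msign :: "nat \<times> nat \<times> nat \<Rightarrow> nat \<times> nat \<times> nat \<Rightarrow> 'k::field" where
  "msign a b = (case a of (a1,a2,a3) \<Rightarrow> case b of (b1,b2,b3) \<Rightarrow>
      (-1) ^ (a2*b1 + a3*b1 + a3*b2))"

definition mulO :: "'k::field elt \<Rightarrow> 'k elt \<Rightarrow> 'k elt" where
  "mulO f g = (\<lambda>(c1,c2,c3). \<Sum>i\<le>c1. \<Sum>j\<le>c2. \<Sum>l\<le>c3.
      msign (i,j,l) (c1-i,c2-j,c3-l) * f (i,j,l) * g (c1-i,c2-j,c3-l))"

definition gen :: "nat \<Rightarrow> 'k::field elt" where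
  "gen i = mon (if i = 1 then (1,0,0) else if i = 2 then (0,1,0) else (0,0,1))"

definition sqexp :: "nat \<Rightarrow> nat \<times> nat \<times> nat" where
  "sqexp j = (if j = 1 then (2,0,0) else if j = 2 then (0,2,0) else (0,0,2))"

definition addt :: "nat \<times> nat \<times> nat \<Rightarrow> nat \<times> nat \<times> nat \<Rightarrow> nat \<times> nat \<times> nat" where
  "addt a b = (fst a + fst b, fst (snd a) + fst (snd b), snd (snd a) + snd (snd b))"

text \<open>Matrices M_3(k) as functions on indices 1..3.\<close>
type_synonym 'k mat3 = "nat \<Rightarrow> nat \<Rightarrow> 'k"

text \<open>The differential of A(M) on a monomial x1^a1 x2^a2 x3^a3, obtained from
d(x_i) = sum_j m_ij x_j^2 and the graded Leibniz rule
d(uv) = d(u) v + (-1)^|u| u d(v).  (Since x_j^2 is central,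
d(x_i^n) = [n odd] x_i^(n-1) d(x_i).)\<close>
definition dmon :: "'k::field mat3 \<Rightarrow> nat \<times> nat \<times> nat \<Rightarrow> 'k elt" where
  "dmon M a = (case a of (a1,a2,a3) \<Rightarrow> (\<lambda>c.
       (if odd a1 then (\<Sum>j\<in>{1..3}. M 1 j * mon (addt (a1-1,a2,a3) (sqexp j)) c) else 0)
     + (-1)^a1 * (if odd a2 then (\<Sum>j\<in>{1..3}. M 2 j * mon (addt (a1,a2-1,a3) (sqexp j)) c) else 0)
     + (-1)^(a1+a2) * (if odd a3 then (\<Sum>j\<in>{1..3}. M 3 j * mon (addt (a1,a2,a3-1) (sqexp j)) c) else 0)))"

definition dO :: "'k::field mat3 \<Rightarrow> 'k elt \<Rightarrow> 'k elt" where
  "dO M f = (\<lambda>c. \<Sum>a\<in>{a. f a \<noteq> 0}. f a * dmon M a c)"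

definition dg_iso :: "'k::field mat3 \<Rightarrow> 'k mat3 \<Rightarrow> bool" where
  "dg_iso M N \<longleftrightarrow> (\<exists>\<phi> :: 'k elt \<Rightarrow> 'k elt.
      bij_betw \<phi> carrierO carrierO
    \<and> (\<forall>f\<in>carrierO. \<forall>g\<in>carrierO. \<forall>r.
          \<phi> (\<lambda>c. r * f c + g c) = (\<lambda>c. r * \<phi> f c + \<phi> g c))
    \<and> (\<forall>f\<in>carrierO. \<forall>g\<in>carrierO. \<phi> (mulO f g) = mulO (\<phi> f) (\<phi> g))
    \<and> \<phi> oneO = oneO
    \<and> (\<forall>n. \<forall>f\<in>carrierO. homog n f \<longrightarrow> homog n (\<phi> f))
    \<and> (\<forall>f\<in>carrierO. \<phi> (dO M f) = dO N (\<phi> f)))"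

definition Emat :: "nat \<Rightarrow> nat \<Rightarrow> 'k::field mat3" where
  "Emat i j = (\<lambda>r s. if r = i \<and> s = j then 1 else 0)"

definition msum :: "'k::field mat3 list \<Rightarrow> 'k mat3" where
  "msum Ms = (\<lambda>r s. \<Sum>A\<leftarrow>Ms. A r s)"

end

theory Submission
  imports Defs
begin

definition wt :: "(nat \<Rightarrow> 'k::field) \<Rightarrow> nat \<times> nat \<times> nat \<Rightarrow> 'k" where
  "wt cc a = (case a of (a1,a2,a3) \<Rightarrow> cc 1 ^ a1 * cc 2 ^ a2 * cc 3 ^ a3)"

lemma wt_nz: "cc 1 \<noteq> 0 \<Longrightarrow> cc 2 \<noteq> 0 \<Longrightarrow> cc 3 \<noteq> 0 \<Longrightarrow> wt cc a \<noteq> (0::'k::field)"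
  by (auto simp: wt_def split: prod.splits)

lemma term_eq:
  fixes M N :: "'k::field mat3"
  assumes h: "\<forall>i\<in>{1,2,3}. \<forall>j\<in>{1,2,3}. N i j * cc i = M i j * cc j ^ 2"
    and i: "i \<in> {1,2,3::nat}" and j: "j \<in> {1,2,3::nat}"
    and b: "b = addt a (sqexp j)" and a': "a' = (if i = 1 then addt a (1,0,0) else if i = 2 then addt a (0,1,0) else addt a (0,0,1))"
  shows "wt cc c * (M i j * mon b c) = wt cc a' * (N i j * mon b c)"
proof (cases "c = b")
  case False thus ?thesis by (simp add: mon_def)
next
  case True
  have hij: "N i j * cc i = M i j * cc j ^ 2" using h i j by blast
  have wb: "wt cc b = wt cc a * cc j ^ 2" using j unfolding b
    by (auto simp: wt_def addt_def sqexp_def power_add split: prod.splits)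
  have wa: "wt cc a' = wt cc a * cc i" using i unfolding a'
    by (auto simp: wt_def addt_def power_add split: prod.splits)
  show ?thesis using True wb wa hij by (simp add: mon_def mult_ac)
qed

lemma dmon_eq:
  fixes M N :: "'k::field mat3"
  assumes h: "\<forall>i\<in>{1,2,3}. \<forall>j\<in>{1,2,3}. N i j * cc i = M i j * cc j ^ 2"
  shows "wt cc c * dmon M a c = wt cc a * dmon N a c"
proof -
  obtain a1 a2 a3 where a: "a = (a1,a2,a3)" by (cases a) auto
  have T1: "wt cc c * (if odd a1 then (\<Sum>j\<in>{1..3}. M 1 j * mon (addt (a1-1,a2,a3) (sqexp j)) c) else 0)
      = wt cc a * (if odd a1 then (\<Sum>j\<in>{1..3}. N 1 j * mon (addt (a1-1,a2,a3) (sqexp j)) c) else 0)"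
  proof (cases "odd a1")
    case True
    then have aa: "a = (if (1::nat) = 1 then addt (a1-1,a2,a3) (1,0,0) else if (1::nat) = 2 then addt (a1-1,a2,a3) (0,1,0) else addt (a1-1,a2,a3) (0,0,1))"
      using a by (auto simp: addt_def elim: oddE)
    show ?thesis using True
      apply (simp only: if_True not_False_eq_True sum_distrib_left)
      apply (rule sum.cong, simp)
      apply (subst aa)
      apply (rule term_eq[OF h]) by auto
  qed simp
  have T2: "wt cc c * (if odd a2 then (\<Sum>j\<in>{1..3}. M 2 j * mon (addt (a1,a2-1,a3) (sqexp j)) c) else 0)
      = wt cc a * (if odd a2 then (\<Sum>j\<in>{1..3}. N 2 j * mon (addt (a1,a2-1,a3) (sqexp j)) c) else 0)"
  proof (cases "odd a2")
    case True
    then have aa: "a = (if (2::nat) = 1 then addt (a1,a2-1,a3) (1,0,0) else if (2::nat) = 2 then addt (a1,a2-1,a3) (0,1,0) else addt (a1,a2-1,a3) (0,0,1))"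
      using a by (auto simp: addt_def elim: oddE)
    show ?thesis using True
      apply (simp only: if_True not_False_eq_True sum_distrib_left)
      apply (rule sum.cong, simp)
      apply (subst aa)
      apply (rule term_eq[OF h]) by auto
  qed simp
  have T3: "wt cc c * (if odd a3 then (\<Sum>j\<in>{1..3}. M 3 j * mon (addt (a1,a2,a3-1) (sqexp j)) c) else 0)
      = wt cc a * (if odd a3 then (\<Sum>j\<in>{1..3}. N 3 j * mon (addt (a1,a2,a3-1) (sqexp j)) c) else 0)"
  proof (cases "odd a3")
    case True
    then have aa: "a = (if (3::nat) = 1 then addt (a1,a2,a3-1) (1,0,0) else if (3::nat) = 2 then addt (a1,a2,a3-1) (0,1,0) else addt (a1,a2,a3-1) (0,0,1))"
      using a by (auto simp: addt_def elim: oddE)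
    show ?thesis using True
      apply (simp only: if_True not_False_eq_True sum_distrib_left)
      apply (rule sum.cong, simp)
      apply (subst aa)
      apply (rule term_eq[OF h]) by auto
  qed simp
  show ?thesis unfolding dmon_def a prod.case
    using T1 T2 T3 by (simp only: distrib_left a[symmetric] mult.left_commute[of "wt cc c"] mult.left_commute[of "wt cc a"])
qed

lemma scale_iso:
  fixes M N :: "'k::field mat3"
  assumes h: "\<forall>i\<in>{1,2,3}. \<forall>j\<in>{1,2,3}. N i j * cc i = M i j * cc j ^ 2"
    and c1: "cc 1 \<noteq> 0" and c2: "cc 2 \<noteq> 0" and c3: "cc 3 \<noteq> 0"
  shows "dg_iso M N"
proof -
  define \<phi> where "\<phi> = (\<lambda>f::'k elt. \<lambda>a. wt cc a * f a)"
  have nz: "\<And>a. wt cc a \<noteq> 0" using wt_nz c1 c2 c3 by blast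
  have supp: "\<And>f. {a. \<phi> f a \<noteq> 0} = {a. f a \<noteq> 0}" using nz by (auto simp: \<phi>_def)
  have bij: "bij_betw \<phi> carrierO carrierO"
  proof (rule bij_betw_byWitness[where f' = "\<lambda>f a. f a / wt cc a"])
    show "\<forall>f\<in>carrierO. (\<lambda>a. \<phi> f a / wt cc a) = f" using nz by (auto simp: \<phi>_def)
    show "\<forall>f\<in>carrierO. \<phi> (\<lambda>a. f a / wt cc a) = f" using nz by (auto simp: \<phi>_def)
    show "\<phi> ` carrierO \<subseteq> carrierO" using supp by (auto simp: carrierO_def)
    have "\<And>f. {a. f a / wt cc a \<noteq> 0} = {a. f a \<noteq> 0}" using nz by auto
    then show "(\<lambda>f a. f a / wt cc a) ` carrierO \<subseteq> carrierO" by (auto simp: carrierO_def)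
  qed
  have lin: "\<forall>f\<in>carrierO. \<forall>g\<in>carrierO. \<forall>r.
          \<phi> (\<lambda>c. r * f c + g c) = (\<lambda>c. r * \<phi> f c + \<phi> g c)"
    by (auto simp: \<phi>_def algebra_simps)
  have mul: "\<forall>f\<in>carrierO. \<forall>g\<in>carrierO. \<phi> (mulO f g) = mulO (\<phi> f) (\<phi> g)"
  proof (intro ballI ext)
    fix f g :: "'k elt" and c :: "nat \<times> nat \<times> nat"
    obtain c1 c2 c3 where c: "c = (c1,c2,c3)" by (cases c) auto
    have "\<And>i j l. i \<le> c1 \<Longrightarrow> j \<le> c2 \<Longrightarrow> l \<le> c3 \<Longrightarrow>
        wt cc (c1,c2,c3) = wt cc (i,j,l) * wt cc (c1-i,c2-j,c3-l)"
    proof -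
      fix i j l assume "i \<le> c1" "j \<le> c2" "l \<le> c3"
      then have "c1 = i + (c1 - i)" "c2 = j + (c2 - j)" "c3 = l + (c3 - l)" by auto
      then have "cc 1 ^ c1 = cc 1 ^ i * cc 1 ^ (c1 - i)" "cc 2 ^ c2 = cc 2 ^ j * cc 2 ^ (c2 - j)"
        "cc 3 ^ c3 = cc 3 ^ l * cc 3 ^ (c3 - l)" by (metis power_add)+
      then show "wt cc (c1,c2,c3) = wt cc (i,j,l) * wt cc (c1-i,c2-j,c3-l)"
        by (simp only: wt_def prod.case mult_ac)
    qed
    then show "\<phi> (mulO f g) c = mulO (\<phi> f) (\<phi> g) c"
      unfolding c \<phi>_def mulO_def
      by (simp add: sum_distrib_left mult_ac)
  qed
  have one: "\<phi> oneO = oneO" by (auto simp: \<phi>_def oneO_def mon_def wt_def)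
  have hom: "\<forall>n. \<forall>f\<in>carrierO. homog n f \<longrightarrow> homog n (\<phi> f)"
    by (auto simp: homog_def \<phi>_def)
  have d: "\<forall>f\<in>carrierO. \<phi> (dO M f) = dO N (\<phi> f)"
  proof (intro ballI ext)
    fix f c
    have "\<phi> (dO M f) c = (\<Sum>a\<in>{a. f a \<noteq> 0}. f a * (wt cc c * dmon M a c))"
      by (simp add: \<phi>_def dO_def sum_distrib_left mult_ac)
    also have "\<dots> = (\<Sum>a\<in>{a. f a \<noteq> 0}. \<phi> f a * dmon N a c)"
      by (rule sum.cong) (auto simp: dmon_eq[OF h] \<phi>_def mult_ac)
    also have "\<dots> = dO N (\<phi> f) c" by (simp add: dO_def supp)
    finally show "\<phi> (dO M f) c = dO N (\<phi> f) c" .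
  qed
  show ?thesis unfolding dg_iso_def using bij lin mul one hom d by blast
qed

theorem lemma7p2:
  fixes m11 m12 m13 l1 l2 :: "'k::field_char_0"
    and M :: "'k mat3"
  assumes "alg_closed TYPE('k)"
    and "(m11, m12, m13) \<noteq> (0, 0, 0)"
    and "m12 * l1^2 + m13 * l2^2 = m11"
    and "l1 \<noteq> 0" and "l2 = 0"
    and "M = (\<lambda>i j. (if i = 1 then 1 else if i = 2 then l1 else l2) *
                    (if j = 1 then m11 else if j = 2 then m12 else m13))"
  shows "(m12 \<noteq> 0 \<and> m13 \<noteq> 0 \<longrightarrow>
            dg_iso M (msum [Emat 1 1, Emat 1 2, Emat 1 3, Emat 2 1, Emat 2 2, Emat 2 3]))
       \<and> (m12 = 0 \<and> m13 \<noteq> 0 \<longrightarrow> dg_iso M (msum [Emat 1 3, Emat 2 3]))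
       \<and> (m12 \<noteq> 0 \<and> m13 = 0 \<longrightarrow>
            dg_iso M (msum [Emat 1 1, Emat 1 2, Emat 2 1, Emat 2 2]))"
proof (intro conjI impI)
  have m11: "m11 = m12 * l1^2" using assms(3,5) by simp
  assume c: "m12 \<noteq> 0 \<and> m13 \<noteq> 0"
  have "\<exists>x. poly [:- (1/(m13*m12*l1^2)), 0, 1:] x = 0"
    using assms(1) unfolding alg_closed_def by (metis degree_pCons_eq_if one_neq_zero order_refl pCons_eq_0_iff one_le_numeral numeral_2_eq_2 degree_pCons_0 Suc_leI zero_less_Suc) 
  then obtain s where s: "s^2 = 1/(m13*m12*l1^2)" by (auto simp: power2_eq_square algebra_simps)
  have snz: "s \<noteq> 0" using s c assms(4) by auto
  show "dg_iso M (msum [Emat 1 1, Emat 1 2, Emat 1 3, Emat 2 1, Emat 2 2, Emat 2 3])"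
    apply (rule scale_iso[where cc = "\<lambda>i. if i = 1 then 1/(m12*l1^2) else if i = 2 then 1/(m12*l1) else s"])
    using c assms(4,5) s snz unfolding assms(6) m11
    by (auto simp: msum_def Emat_def field_simps power2_eq_square)
next
  have m11: "m11 = m12 * l1^2" using assms(3,5) by simp
  assume c: "m12 = 0 \<and> m13 \<noteq> 0"
  show "dg_iso M (msum [Emat 1 3, Emat 2 3])"
    apply (rule scale_iso[where cc = "\<lambda>i. if i = 1 then m13 else if i = 2 then l1*m13 else 1"])
    using c assms(4,5) unfolding assms(6) m11
    by (auto simp: msum_def Emat_def field_simps power2_eq_square)
next
  have m11: "m11 = m12 * l1^2" using assms(3,5) by simp
  assume c: "m12 \<noteq> 0 \<and> m13 = 0"
  show "dg_iso M (msum [Emat 1 1, Emat 1 2, Emat 2 1, Emat 2 2])"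
    apply (rule scale_iso[where cc = "\<lambda>i. if i = 1 then 1/(m12*l1^2) else if i = 2 then 1/(m12*l1) else 1"])
    using c assms(4,5) unfolding assms(6) m11
    by (auto simp: msum_def Emat_def field_simps power2_eq_square)
qed

end
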